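(* Assume the setup (S) of the context, and suppose moreover that $\mathbb{B}$ is split exact and $I=R$. Then the complex $\mathbb{A}$ is split exact.
   Context: Setup (S): $R$ is a Noetherian unique factorization domain with $1/2\in R$; $p\ge1$, $q\ge3$, $n=p+2$; $B_0=R^{q-2}$, $B_1=R^{p+q}$, $H=R^n$. On $H\oplus H^*$ let $Q(f,f')=f'(f)$ and $\beta\big((f,f'),(g,g')\big)=f'(g)+g'(f)$, which identifies $(H\oplus H^* )^*$ with $H\oplus H^*$. Let $\mathbb{B}\colon 0\to B_0^*\xrightarrow{\delta_4}B_1^*\xrightarrow{\delta_3}H\oplus H^*\xrightarrow{\delta_2}B_1\xrightarrow{\delta_1}B_0$ be a complex with $\delta_2=\delta_3^*$ and $\delta_1=\delta_4^*$ (duals taken using $\beta$). The Clifford action of $H\oplus H^*$ on $\bigwedge H$ is $(f,f')\cdot\omega=f\wedge\omega+\iota_{f'}(\omega)$, where $\iota_{f'}(e_1\wedge\cdots\wedge e_j)=\sum_i(-1)^{i-1}f'(e_i)\,e_1\wedge\cdots\widehat{e_i}\cdots\wedge e_j$. Let $s\in\bigwedge^{\mathrm{odd}}H$ be an element such that for every prime $\mathfrak p\notin\operatorname{Supp}H_0(\mathbb{B})$, the image of $s$ generates the $R_{\mathfrak p}$-module $\{\omega\in\bigwedge H_{\mathfrak p}: x\cdot\omega=0\ \forall x\in(\operatorname{im}\delta_3)_{\mathfrak p}\}$. Let $s_1\in H$ be the degree-one component of $s$, and let $u\in B_1^*$ be any element with $\delta_3(u)=(s_1,0)$. Define $\mathbb{A}\colon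 0\to B_0^*\oplus R\xrightarrow{d_3}B_1^*\xrightarrow{d_2}H^*\xrightarrow{d_1}R$ by $d_3(b,r)=\delta_4(b)+ru$; $d_2=\pi_{H^*}\circ\delta_3$ with $\pi_{H^*}$ the projection onto $H^*$; $d_1(f')=f'(s_1)$. Let $I=\operatorname{im}d_1$. *)

theory Defs
  imports "HOL-Computational_Algebra.Fraction_Field"
          "HOL-Computational_Algebra.Factorial_Ring"
          "Jordan_Normal_Form.Matrix"
begin

definition is_ideal :: "'a::comm_ring_1 set \<Rightarrow> bool" where
  "is_ideal I \<longleftrightarrow> 0 \<in> I \<and> (\<forall>x\<in>I. \<forall>y\<in>I. x + y \<in> I) \<and> (\<forall>r. \<forall>x\<in>I. r * x \<in> I)"

definition prime_ideal :: "'a::comm_ring_1 set \<Rightarrow> bool" where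
  "prime_ideal P \<longleftrightarrow> is_ideal P \<and> P \<noteq> UNIV \<and> (\<forall>a b. a * b \<in> P \<longrightarrow> a \<in> P \<or> b \<in> P)"

definition ideal_gen :: "'a::comm_ring_1 set \<Rightarrow> 'a set" where
  "ideal_gen F = {(\<Sum>f\<in>G. c f * f) | G c. finite G \<and> G \<subseteq> F}"

definition noetherian_ring :: "'a::comm_ring_1 itself \<Rightarrow> bool" where
  "noetherian_ring _ \<longleftrightarrow>
     (\<forall>I::'a set. is_ideal I \<longrightarrow> (\<exists>F. finite F \<and> F \<subseteq> I \<and> I = ideal_gen F))"

definition is_chain :: "nat list \<Rightarrow> 'a::comm_ring_1 mat list \<Rightarrow> bool" where
  "is_chain ks ds \<longleftrightarrow> length ks = length ds + 1 \<and>
     (\<forall>i<length ds. ds!i \<in> carrier_mat (ks!(i+1)) (ks!i)) \<and>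
     (\<forall>i. i + 1 < length ds \<longrightarrow> ds!(i+1) * ds!i = 0\<^sub>m (ks!(i+2)) (ks!i))"

definition exact_at :: "nat list \<Rightarrow> 'a::comm_ring_1 mat list \<Rightarrow> nat \<Rightarrow> bool" where
  "exact_at ks ds i \<longleftrightarrow>
     {v \<in> carrier_vec (ks!i). ds!i *\<^sub>v v = 0\<^sub>v (ks!(i+1))} =
     {ds!(i-1) *\<^sub>v w | w. w \<in> carrier_vec (ks!(i-1))}"

definition split_exact :: "nat list \<Rightarrow> 'a::comm_ring_1 mat list \<Rightarrow> bool" where
  "split_exact ks ds \<longleftrightarrow>
     (let ks' = 0 # ks @ [0];
          ds' = 0\<^sub>m (hd ks) 0 # ds @ [0\<^sub>m 0 (last ks)]
      in is_chain ks' ds' \<and>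
         (\<forall>i. 0 < i \<and> i < length ds' \<longrightarrow> exact_at ks' ds' i) \<and>
         (\<forall>i<length ds'. \<exists>s \<in> carrier_mat (ks'!i) (ks'!(i+1)). ds'!i * s * ds'!i = ds'!i))"

text \<open>An element of the exterior algebra of R^n is a coefficient function on subsets
  of {..<n} (basis e_S = e_{i1} \<and> ... \<and> e_{ik}, i1 < ... < ik), zero outside.\<close>
definition ext_alg :: "nat \<Rightarrow> (nat set \<Rightarrow> 'b::zero) set" where
  "ext_alg n = {\<omega>. \<forall>S. \<not> S \<subseteq> {..<n} \<longrightarrow> \<omega> S = 0}"

text \<open>Clifford action of x = (f,f') in H \<oplus> H* (coordinates 0..n-1 for f, n..2n-1 for f'):
  x \<cdot> \<omega> = f \<and> \<omega> + \<iota>_{f'} \<omega>.\<close>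
definition clifford :: "nat \<Rightarrow> 'b::comm_ring_1 vec \<Rightarrow> (nat set \<Rightarrow> 'b) \<Rightarrow> (nat set \<Rightarrow> 'b)" where
  "clifford n x \<omega> = (\<lambda>S. if S \<subseteq> {..<n} then
       (\<Sum>i\<in>S. (-1) ^ card {j\<in>S. j < i} * x $ i * \<omega> (S - {i}))
     + (\<Sum>i\<in>{..<n} - S. (-1) ^ card {j\<in>S. j < i} * x $ (n + i) * \<omega> (insert i S))
     else 0)"

definition emb :: "'a::idom \<Rightarrow> 'a fract" where "emb a = Fraction_Field.Fract a 1"

definition loc_ring :: "'a::idom set \<Rightarrow> 'a fract set" where
  "loc_ring P = {Fraction_Field.Fract a t | a t. t \<notin> P}"

definition loc_vecs :: "'a::idom set \<Rightarrow> nat \<Rightarrow> 'a fract vec set" where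
  "loc_vecs P k = {v \<in> carrier_vec k. \<forall>i<k. v $ i \<in> loc_ring P}"

definition loc_image :: "'a::idom set \<Rightarrow> 'a mat \<Rightarrow> 'a fract vec set" where
  "loc_image P M = {map_mat emb M *\<^sub>v c | c. c \<in> loc_vecs P (dim_col M)}"

text \<open>P \<in> Supp (coker M) iff (coker M)_P \<noteq> 0 iff (R_P)^m \<noteq> (im M)_P.\<close>
definition in_supp_coker :: "'a::idom set \<Rightarrow> 'a mat \<Rightarrow> bool" where
  "in_supp_coker P M \<longleftrightarrow> loc_vecs P (dim_row M) \<noteq> loc_image P M"

definition loc_ext_alg :: "'a::idom set \<Rightarrow> nat \<Rightarrow> (nat set \<Rightarrow> 'a fract) set" where
  "loc_ext_alg P n = {\<omega> \<in> ext_alg n. \<forall>S. S \<subseteq> {..<n} \<longrightarrow> \<omega> S \<in> loc_ring P}"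

definition loc_annihilated :: "'a::idom set \<Rightarrow> nat \<Rightarrow> 'a mat \<Rightarrow> (nat set \<Rightarrow> 'a fract) set" where
  "loc_annihilated P n M =
     {\<omega> \<in> loc_ext_alg P n. \<forall>x \<in> loc_image P M. clifford n x \<omega> = (\<lambda>_. 0)}"

definition beta_mat :: "nat \<Rightarrow> 'a::comm_ring_1 mat" where
  "beta_mat n = mat (2*n) (2*n) (\<lambda>(i,j). if (i < n \<and> j = i + n) \<or> (n \<le> i \<and> j + n = i) then 1 else 0)"

text \<open>B: 0 -> B0* -d4-> B1* -d3-> H\<oplus>H* -d3^*-> B1 -d4^*-> B0, with the dual of d3
  taken through the identification by beta.\<close>
definition cplxB_dims :: "nat \<Rightarrow> nat \<Rightarrow> nat list" where
  "cplxB_dims p q = [q - 2, p + q, 2 * (p + 2), p + q, q - 2]"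

definition cplxB_maps :: "nat \<Rightarrow> 'a::comm_ring_1 mat \<Rightarrow> 'a mat \<Rightarrow> 'a mat list" where
  "cplxB_maps n D4 D3 = [D4, D3, transpose_mat D3 * beta_mat n, transpose_mat D4]"

definition deg1 :: "nat \<Rightarrow> (nat set \<Rightarrow> 'a) \<Rightarrow> 'a vec" where
  "deg1 n s = vec n (\<lambda>i. s {i})"

text \<open>A: 0 -> B0*\<oplus>R -d3-> B1* -d2-> H* -d1-> R.\<close>
definition cplxA_dims :: "nat \<Rightarrow> nat \<Rightarrow> nat list" where
  "cplxA_dims p q = [q - 2 + 1, p + q, p + 2, 1]"

definition A_d3 :: "nat \<Rightarrow> nat \<Rightarrow> 'a::comm_ring_1 mat \<Rightarrow> 'a vec \<Rightarrow> 'a mat" where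
  "A_d3 p q D4 u = mat (p + q) (q - 2 + 1) (\<lambda>(i,j). if j < q - 2 then D4 $$ (i,j) else u $ i)"

definition A_d2 :: "nat \<Rightarrow> nat \<Rightarrow> 'a::comm_ring_1 mat \<Rightarrow> 'a mat" where
  "A_d2 p q D3 = mat (p + 2) (p + q) (\<lambda>(i,j). D3 $$ (p + 2 + i, j))"

definition A_d1 :: "nat \<Rightarrow> 'a::comm_ring_1 vec \<Rightarrow> 'a mat" where
  "A_d1 n s1 = mat 1 n (\<lambda>(_,j). s1 $ j)"

definition cplxA_maps :: "nat \<Rightarrow> nat \<Rightarrow> 'a::comm_ring_1 mat \<Rightarrow> 'a mat \<Rightarrow> 'a vec \<Rightarrow> 'a vec \<Rightarrow> 'a mat list" where
  "cplxA_maps p q D4 D3 u s1 = [A_d3 p q D4 u, A_d2 p q D3, A_d1 (p + 2) s1]"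

end

theory Submission
  imports Defs
begin


lemma emb_hom: "inj_comm_ring_hom (emb :: 'a::idom \<Rightarrow> 'a fract)"
  by unfold_locales (auto simp: emb_def One_fract_def Zero_fract_def eq_fract)

lemma sum_lessThan_add_split:
  "(\<Sum>l<n+(m::nat). f l) = (\<Sum>l<n. f l) + (\<Sum>l<m. f (n+l))"
  by (induction m) (auto simp: add.assoc)

lemma mv_idx:
  assumes "i < dim_row M" "dim_vec v = dim_col M"
  shows "(M *\<^sub>v v) $ i = (\<Sum>j<dim_col M. M $$ (i,j) * v $ j)"
  using assms by (auto simp: scalar_prod_def atLeast0LessThan intro!: sum.cong)

lemma clifford_emb:
  assumes "dim_vec x = 2 * n"
  shows "clifford n (map_vec emb x) (\<lambda>S. emb (\<omega> S)) S = emb (clifford n x \<omega> S)"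
proof -
  interpret h: inj_comm_ring_hom "emb :: 'a \<Rightarrow> 'a fract" by (rule emb_hom)
  have a: "\<And>i. i \<in> S \<Longrightarrow> S \<subseteq> {..<n} \<Longrightarrow> map_vec emb x $ i = emb (x $ i)"
    using assms by auto
  have b: "\<And>i. i \<in> {..<n} - S \<Longrightarrow> map_vec emb x $ (n+i) = emb (x $ (n+i))"
    using assms by auto
  show ?thesis
    unfolding clifford_def
    by (auto simp: h.hom_add h.hom_mult h.hom_sum h.hom_power h.hom_uminus h.hom_one h.hom_zero a b intro!: sum.cong)
qed

lemma cliff0:
  assumes "clifford n x \<omega> = (\<lambda>_. 0)"
  shows "(\<Sum>m<n. x $ (n+m) * \<omega> {m}) = 0"
  using fun_cong[OF assms, of "{}"] unfolding clifford_def by simp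

lemma cliff2:
  assumes "clifford n x \<omega> = (\<lambda>_. 0)" "i < j" "j < n"
  shows "x $ i * \<omega> {j} - x $ j * \<omega> {i} +
     (\<Sum>m\<in>{..<n} - {i,j}. (-1) ^ card {l\<in>{i,j}. l < m} * x $ (n + m) * \<omega> (insert m {i,j})) = 0"
proof -
  have e1: "{l. (l = i \<or> l = j) \<and> l < i} = {}" "{l. (l = i \<or> l = j) \<and> l < j} = {i}" using assms by auto
  have e2: "{i,j} - {i} = {j}" "{i,j} - {j} = {i}" using assms by auto
  show ?thesis
    using fun_cong[OF assms(1), of "{i,j}"] assms(2,3) unfolding clifford_def
    by (simp add: e1 e2)
qed


lemma zero_mat_mult_vec[simp]: "v \<in> carrier_vec b \<Longrightarrow> (0\<^sub>m a b :: 'a::semiring_0 mat) *\<^sub>v v = 0\<^sub>v a"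
  by (auto intro!: eq_vecI simp: scalar_prod_def)

lemma mat_mult_zero_vec[simp]: "(A :: 'a::semiring_0 mat) \<in> carrier_mat a b \<Longrightarrow> A *\<^sub>v 0\<^sub>v b = 0\<^sub>v a"
  by (auto intro!: eq_vecI simp: scalar_prod_def)

lemma mult_mat_vec_smult':
  fixes A :: "'a::comm_semiring_1 mat"
  assumes "A \<in> carrier_mat nr nc" "v \<in> carrier_vec nc"
  shows "A *\<^sub>v (k \<cdot>\<^sub>v v) = k \<cdot>\<^sub>v (A *\<^sub>v v)"
  using assms by (auto intro!: eq_vecI simp: scalar_prod_def sum_distrib_left mult_ac)

lemma split_step:
  fixes d :: "'a::comm_ring_1 mat"
  assumes d: "d \<in> carrier_mat b a" and e: "e \<in> carrier_mat c b" and sm: "sm \<in> carrier_mat b c"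
    and ese: "e * sm * e = e" and ed: "e * d = 0\<^sub>m c a"
    and ex: "{v \<in> carrier_vec b. e *\<^sub>v v = 0\<^sub>v c} = {d *\<^sub>v w | w. w \<in> carrier_vec a}"
  shows "\<exists>t \<in> carrier_mat a b. d * t * d = d"
proof -
  define P where "P = 1\<^sub>m b - sm * e"
  have Pc: "P \<in> carrier_mat b b" using sm e by (auto simp: P_def)
  have "e * P = e * 1\<^sub>m b - e * (sm * e)"
    unfolding P_def using e sm by (subst mult_minus_distrib_mat[of _ c b]) auto
  also have "\<dots> = e - e * sm * e" using e sm by (subst assoc_mult_mat[of _ c b _ c]) auto
  also have "\<dots> = 0\<^sub>m c b" using ese e by simp
  finally have eP: "e * P = 0\<^sub>m c b" .
  have "\<forall>j. \<exists>w. j < b \<longrightarrow> w \<in> carrier_vec a \<and> col P j = d *\<^sub>v w"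
  proof (intro allI impI)
    fix j
    show "\<exists>w. j < b \<longrightarrow> w \<in> carrier_vec a \<and> col P j = d *\<^sub>v w"
    proof (cases "j < b")
      case True
      have "e *\<^sub>v col P j = col (e * P) j" using e Pc True by (subst col_mult2) auto
      also have "\<dots> = 0\<^sub>v c" using eP True by auto
      finally have "col P j \<in> {v \<in> carrier_vec b. e *\<^sub>v v = 0\<^sub>v c}" using Pc by auto
      then show ?thesis using ex by auto
    qed auto
  qed
  then obtain w where w: "\<And>j. j < b \<Longrightarrow> w j \<in> carrier_vec a \<and> col P j = d *\<^sub>v w j"
    by metis
  define t where "t = mat a b (\<lambda>(i,j). w j $ i)"
  have tc: "t \<in> carrier_mat a b" by (simp add: t_def)
  have dt: "d * t = P"
  proof (rule mat_col_eqI)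
    fix j assume "j < dim_col P"
    then have j: "j < b" using Pc by auto
    have ct: "col t j = w j" using w[OF j] j by (auto simp: t_def)
    show "col (d * t) j = col P j" using d tc j w[OF j] by (subst col_mult2) (auto simp: ct)
  qed (use d tc Pc in auto)
  have "d * t * d = P * d" by (simp add: dt)
  also have "\<dots> = d - sm * e * d" unfolding P_def using d e sm
    by (subst minus_mult_distrib_mat[of _ b b]) auto
  also have "\<dots> = d - sm * (e * d)" using d e sm by (subst assoc_mult_mat[of _ b c _ b]) auto
  also have "\<dots> = d" using ed sm d by (auto intro!: eq_matI)
  finally show ?thesis using tc by blast
qed


definition tz :: "(nat set \<Rightarrow> 'a::comm_ring_1) \<Rightarrow> nat \<Rightarrow> nat \<Rightarrow> nat \<Rightarrow> 'a" where
  "tz \<omega> i j m = (if m = i \<or> m = j then 0 else (-1) ^ card {l\<in>{i,j}. l < m} * \<omega> (insert m {i,j}))"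

definition tt :: "(nat set \<Rightarrow> 'a::comm_ring_1) \<Rightarrow> nat \<Rightarrow> nat \<Rightarrow> nat \<Rightarrow> 'a" where
  "tt \<omega> i j m = (if i < j then tz \<omega> i j m else if j < i then - tz \<omega> j i m else 0)"

lemma tz_sum:
  assumes c: "clifford n x \<omega> = (\<lambda>_. 0)" and ij: "i < j" "j < n"
  shows "(\<Sum>m<n. tz \<omega> i j m * x $ (n+m)) = x $ j * \<omega> {i} - x $ i * \<omega> {j}"
proof -
  have c2: "x $ i * \<omega> {j} - x $ j * \<omega> {i} +
     (\<Sum>m\<in>{..<n} - {i,j}. (-1) ^ card {l\<in>{i,j}. l < m} * x $ (n + m) * \<omega> (insert m {i,j})) = 0"
    by (rule cliff2[OF c ij])
  have "(\<Sum>m<n. tz \<omega> i j m * x $ (n+m)) =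
      (\<Sum>m\<in>{..<n} - {i,j}. (-1) ^ card {l\<in>{i,j}. l < m} * x $ (n + m) * \<omega> (insert m {i,j}))"
  proof (rule sum.mono_neutral_cong_right)
    show "\<forall>m\<in>{..<n} - ({..<n} - {i, j}). tz \<omega> i j m * x $ (n + m) = 0"
      unfolding tz_def by auto
    show "tz \<omega> i j m * x $ (n + m) =
          (-1) ^ card {l\<in>{i,j}. l < m} * x $ (n + m) * \<omega> (insert m {i,j})"
      if "m \<in> {..<n} - {i, j}" for m
    proof -
      have "\<not> (m = i \<or> m = j)" using that by blast
      then show ?thesis unfolding tz_def by (simp add: mult_ac)
    qed
  qed auto
  moreover
  have "(\<Sum>m\<in>{..<n} - {i,j}. (-1) ^ card {l\<in>{i,j}. l < m} * x $ (n + m) * \<omega> (insert m {i,j}))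
       = - (x $ i * \<omega> {j} - x $ j * \<omega> {i})"
    using c2 by (simp only: eq_neg_iff_add_eq_0 add.commute)
  moreover have "- (x $ i * \<omega> {j} - x $ j * \<omega> {i}) = x $ j * \<omega> {i} - x $ i * \<omega> {j}" by simp
  ultimately show ?thesis by simp
qed

lemma tt_sum:
  assumes c: "clifford n x \<omega> = (\<lambda>_. 0)" and ij: "i < n" "j < n"
  shows "(\<Sum>m<n. tt \<omega> i j m * x $ (n+m)) = x $ j * \<omega> {i} - x $ i * \<omega> {j}"
proof -
  consider "i < j" | "j < i" | "i = j" by linarith
  then show ?thesis
  proof cases
    case 1
    then show ?thesis using tz_sum[OF c 1 ij(2)] by (simp add: tt_def)
  next
    case 2
    have "(\<Sum>m<n. tt \<omega> i j m * x $ (n+m)) = - (\<Sum>m<n. tz \<omega> j i m * x $ (n+m))"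
      using 2 by (simp add: tt_def sum_negf)
    then show ?thesis using tz_sum[OF c 2 ij(1)] by simp
  next
    case 3
    then show ?thesis by (simp add: tt_def)
  qed
qed


lemma key_lemma:
  fixes a b f lam sg :: "nat \<Rightarrow> 'a::comm_ring_1" and T :: "nat \<Rightarrow> nat \<Rightarrow> nat \<Rightarrow> 'a"
  assumes E: "\<And>i j. i < n \<Longrightarrow> j < n \<Longrightarrow> (\<Sum>m<n. T i j m * b m) = a j * sg i - a i * sg j"
    and l1: "(\<Sum>j<n. sg j * lam j) = 1" and f0: "(\<Sum>j<n. sg j * f j) = 0"
  shows "(\<Sum>l<n. a l * f l) + (\<Sum>m<n. b m * (- (\<Sum>i<n. \<Sum>j<n. lam i * f j * T i j m)))  = 0"
proof -
  have "(\<Sum>m<n. b m * (- (\<Sum>i<n. \<Sum>j<n. lam i * f j * T i j m)))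
       = - (\<Sum>m<n. \<Sum>i<n. \<Sum>j<n. lam i * f j * (T i j m * b m))"
    apply (simp add: sum_negf sum_distrib_left)
    apply (rule sum.cong[OF refl])+
    apply (simp add: mult_ac)
    done
  also have "(\<Sum>m<n. \<Sum>i<n. \<Sum>j<n. lam i * f j * (T i j m * b m))
       = (\<Sum>i<n. \<Sum>j<n. \<Sum>m<n. lam i * f j * (T i j m * b m))"
    apply (rule trans[OF sum.swap])
    apply (rule sum.cong[OF refl])
    apply (rule sum.swap)
    done
  also have "\<dots> = (\<Sum>i<n. \<Sum>j<n. lam i * f j * (a j * sg i - a i * sg j))"
    by (intro sum.cong refl) (simp add: sum_distrib_left[symmetric] E)
  also have "\<dots> = (\<Sum>i<n. \<Sum>j<n. (sg i * lam i) * (f j * a j) - (lam i * a i) * (sg j * f j))"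
    by (intro sum.cong refl) (simp add: algebra_simps)
  also have "\<dots> = (\<Sum>i<n. \<Sum>j<n. (sg i * lam i) * (f j * a j)) - (\<Sum>i<n. \<Sum>j<n. (lam i * a i) * (sg j * f j))"
    by (simp add: sum_subtractf)
  also have "\<dots> = (\<Sum>i<n. sg i * lam i) * (\<Sum>j<n. f j * a j)
                  - (\<Sum>i<n. lam i * a i) * (\<Sum>j<n. sg j * f j)"
    by (simp add: sum_product)
  also have "\<dots> = (\<Sum>j<n. f j * a j)" using l1 f0 by simp
  finally show ?thesis by (simp add: mult.commute)
qed


theorem mainTheorem10:
  fixes p q :: nat
    and D4 D3 :: "'a::{factorial_semiring, idom} mat"
    and s :: "nat set \<Rightarrow> 'a"
    and u :: "'a vec"
  defines "n \<equiv> p + 2"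
  assumes noeth: "noetherian_ring TYPE('a)"
    and half: "is_unit (2::'a)"
    and p: "1 \<le> p" and q: "3 \<le> q"
    and D4: "D4 \<in> carrier_mat (p + q) (q - 2)"
    and D3: "D3 \<in> carrier_mat (2 * n) (p + q)"
    and B_split: "split_exact (cplxB_dims p q) (cplxB_maps n D4 D3)"
    and s_ext: "s \<in> ext_alg n"
    and s_odd: "\<forall>S. s S \<noteq> 0 \<longrightarrow> odd (card S)"
    and s_gen: "\<forall>P. prime_ideal P \<and> \<not> in_supp_coker P (transpose_mat D4) \<longrightarrow>
                  loc_annihilated P n D3 = {(\<lambda>S. r * emb (s S)) | r. r \<in> loc_ring P}"
    and u: "u \<in> carrier_vec (p + q)"
    and u_lift: "D3 *\<^sub>v u = vec (2 * n) (\<lambda>i. if i < n then deg1 n s $ i else 0)"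
    and I_eq_R: "{(A_d1 n (deg1 n s) *\<^sub>v f) $ 0 | f. f \<in> carrier_vec n} = UNIV"
  shows "split_exact (cplxA_dims p q) (cplxA_maps p q D4 D3 u (deg1 n s))"
proof -
  interpret h: inj_comm_ring_hom "emb :: 'a \<Rightarrow> 'a fract" by (rule emb_hom)
  define N where "N = p + q"
  define m0 where "m0 = q - 2"
  define Bd where "Bd = transpose_mat D3 * beta_mat n"
  have D4c: "D4 \<in> carrier_mat N m0" using D4 by (simp add: N_def m0_def)
  have D3c: "D3 \<in> carrier_mat (2*n) N" using D3 by (simp add: N_def)
  have Bdc: "Bd \<in> carrier_mat N (2*n)" using D3c by (auto simp: Bd_def beta_mat_def)
  have uc: "u \<in> carrier_vec N" using u by (simp add: N_def)
  have Bs: "split_exact [m0, N, 2*n, N, m0] [D4, D3, Bd, transpose_mat D4]"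
    using B_split by (simp add: cplxB_dims_def cplxB_maps_def N_def m0_def n_def Bd_def)
  define ksB where "ksB = [0, m0, N, 2*n, N, m0, 0]"
  define dsB where "dsB = [0\<^sub>m m0 0, D4, D3, Bd, transpose_mat D4, 0\<^sub>m 0 m0]"
  have chB: "is_chain ksB dsB" and exB: "\<And>i. 0 < i \<and> i < 6 \<Longrightarrow> exact_at ksB dsB i"
    using Bs unfolding split_exact_def Let_def ksB_def dsB_def by auto
  have D3D4: "D3 * D4 = 0\<^sub>m (2*n) m0"
    using chB unfolding is_chain_def ksB_def dsB_def by (auto dest: spec[of _ 1])
  have ex1: "{v \<in> carrier_vec m0. D4 *\<^sub>v v = 0\<^sub>v N} = {0\<^sub>m m0 0 *\<^sub>v w | w. w \<in> carrier_vec 0}"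
    using exB[of 1] unfolding exact_at_def ksB_def dsB_def by simp
  have ex2: "{v \<in> carrier_vec N. D3 *\<^sub>v v = 0\<^sub>v (2*n)} = {D4 *\<^sub>v w | w. w \<in> carrier_vec m0}"
    using exB[of 2] unfolding exact_at_def ksB_def dsB_def by (simp add: numeral_2_eq_2)
  have ex3: "{v \<in> carrier_vec (2*n). Bd *\<^sub>v v = 0\<^sub>v N} = {D3 *\<^sub>v w | w. w \<in> carrier_vec N}"
    using exB[of 3] unfolding exact_at_def ksB_def dsB_def by (simp add: numeral_3_eq_3)
  have ex5: "{v \<in> carrier_vec m0. 0\<^sub>m 0 m0 *\<^sub>v v = 0\<^sub>v 0} = {transpose_mat D4 *\<^sub>v w | w. w \<in> carrier_vec N}"
    using exB[of 5] unfolding exact_at_def ksB_def dsB_def by (simp add: eval_nat_numeral)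
  have D4inj: "\<And>b. b \<in> carrier_vec m0 \<Longrightarrow> D4 *\<^sub>v b = 0\<^sub>v N \<Longrightarrow> b = 0\<^sub>v m0"
  proof -
    fix b :: "'a vec" assume "b \<in> carrier_vec m0" "D4 *\<^sub>v b = 0\<^sub>v N"
    then have "b \<in> {0\<^sub>m m0 0 *\<^sub>v w | w. w \<in> carrier_vec 0}" using ex1 by blast
    then show "b = 0\<^sub>v m0" by (auto intro!: eq_vecI simp: scalar_prod_def)
  qed
  have ker2: "\<And>v. v \<in> carrier_vec N \<Longrightarrow> D3 *\<^sub>v v = 0\<^sub>v (2*n) \<Longrightarrow> \<exists>w \<in> carrier_vec m0. v = D4 *\<^sub>v w"
    using ex2 by blast
  have ker3: "\<And>v. v \<in> carrier_vec (2*n) \<Longrightarrow> Bd *\<^sub>v v = 0\<^sub>v N \<Longrightarrow> \<exists>w \<in> carrier_vec N. v = D3 *\<^sub>v w"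
    using ex3 by blast
  have surj5: "\<And>v. v \<in> carrier_vec m0 \<Longrightarrow> \<exists>w \<in> carrier_vec N. v = transpose_mat D4 *\<^sub>v w"
  proof -
    fix v :: "'a vec" assume v: "v \<in> carrier_vec m0"
    have "0\<^sub>m 0 m0 *\<^sub>v v = 0\<^sub>v 0" by (auto intro!: eq_vecI)
    then show "\<exists>w \<in> carrier_vec N. v = transpose_mat D4 *\<^sub>v w" using ex5 v by blast
  qed
  have prime0: "prime_ideal ({0} :: 'a set)"
  proof -
    have "(1::'a) \<notin> {0}" by simp
    then have "{0::'a} \<noteq> UNIV" by blast
    then show ?thesis unfolding prime_ideal_def is_ideal_def by simp
  qed
  have lr0: "loc_ring ({0} :: 'a set) = UNIV"
  proof -
    have "x \<in> loc_ring {0}" for x :: "'a fract"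
      by (cases x) (auto simp: loc_ring_def)
    then show ?thesis by auto
  qed
  have lv0: "loc_vecs ({0} :: 'a set) k = carrier_vec k" for k
    by (auto simp: loc_vecs_def lr0)
  have "\<forall>j. \<exists>w. j < m0 \<longrightarrow> w \<in> carrier_vec N \<and> unit_vec m0 j = transpose_mat D4 *\<^sub>v w"
    using surj5 by (metis unit_vec_carrier)
  then obtain wS where wS: "\<And>j. j < m0 \<Longrightarrow> wS j \<in> carrier_vec N \<and> unit_vec m0 j = transpose_mat D4 *\<^sub>v wS j"
    by metis
  define S where "S = mat N m0 (\<lambda>(i,j). wS j $ i)"
  have Sc: "S \<in> carrier_mat N m0" by (simp add: S_def)
  have D4tc: "transpose_mat D4 \<in> carrier_mat m0 N" using D4c by auto
  have D4S: "transpose_mat D4 * S = 1\<^sub>m m0"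
  proof (rule mat_col_eqI)
    fix j assume "j < dim_col (1\<^sub>m m0 :: 'a mat)"
    then have j: "j < m0" by simp
    have ct: "col S j = wS j" using wS[OF j] j by (auto simp: S_def)
    show "col (transpose_mat D4 * S) j = col (1\<^sub>m m0) j"
      using D4tc Sc j wS[OF j] by (subst col_mult2[of _ m0 N]) (auto simp: ct)
  qed (use D4tc Sc in auto)
  have nsupp: "\<not> in_supp_coker {0} (transpose_mat D4)"
  proof -
    have "loc_vecs {0} m0 = loc_image {0} (transpose_mat D4)"
    proof
      show "loc_vecs {0} m0 \<subseteq> loc_image {0} (transpose_mat D4)"
      proof
        fix v :: "'a fract vec" assume "v \<in> loc_vecs {0} m0"
        then have v: "v \<in> carrier_vec m0" by (simp add: lv0)
        have "map_mat emb (transpose_mat D4) *\<^sub>v (map_mat emb S *\<^sub>v v)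
            = (map_mat emb (transpose_mat D4) * map_mat emb S) *\<^sub>v v"
          using D4tc Sc v by (subst assoc_mult_mat_vec[of _ m0 N _ m0]) auto
        also have "\<dots> = map_mat emb (transpose_mat D4 * S) *\<^sub>v v"
          using D4tc Sc by (subst h.mat_hom_mult[of _ m0 N _ m0]) auto
        also have "\<dots> = v" using v by (simp add: D4S h.mat_hom_one)
        finally show "v \<in> loc_image {0} (transpose_mat D4)"
          unfolding loc_image_def lv0 using D4c Sc v by (auto intro!: exI[of _ "map_mat emb S *\<^sub>v v"])
      qed
    next
      show "loc_image {0} (transpose_mat D4) \<subseteq> loc_vecs {0} m0"
        unfolding loc_image_def lv0 using D4c by auto
    qed
    then show ?thesis unfolding in_supp_coker_def using D4c by simp
  qed
  have ann: "loc_annihilated {0} n D3 = {(\<lambda>S. r * emb (s S)) | r. r \<in> loc_ring {0}}"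
    using s_gen prime0 nsupp by blast
  have "(\<lambda>S. 1 * emb (s S)) \<in> loc_annihilated {0} n D3"
    unfolding ann lr0 by blast
  then have annx: "\<And>x. x \<in> loc_image {0} D3 \<Longrightarrow> clifford n x (\<lambda>S. emb (s S)) = (\<lambda>_. 0)"
    unfolding loc_annihilated_def by auto
  have SP: "\<And>v. v \<in> carrier_vec N \<Longrightarrow> clifford n (D3 *\<^sub>v v) s = (\<lambda>_. 0)"
  proof -
    fix v :: "'a vec" assume v: "v \<in> carrier_vec N"
    have "map_mat emb D3 *\<^sub>v map_vec emb v \<in> loc_image {0} D3"
      unfolding loc_image_def lv0 using D3c v by auto
    moreover have "map_mat emb D3 *\<^sub>v map_vec emb v = map_vec emb (D3 *\<^sub>v v)"
      using D3c v by (subst h.mult_mat_vec_hom[of _ "2*n" N]) auto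
    ultimately have "clifford n (map_vec emb (D3 *\<^sub>v v)) (\<lambda>S. emb (s S)) = (\<lambda>_. 0)"
      using annx by simp
    then have "\<And>S. emb (clifford n (D3 *\<^sub>v v) s S) = 0"
      using clifford_emb[of "D3 *\<^sub>v v" n s] D3c v by (metis dim_mult_mat_vec carrier_matD(1))
    then show "clifford n (D3 *\<^sub>v v) s = (\<lambda>_. 0)" by auto
  qed
  define s1 where "s1 = deg1 n s"
  have s1c: "s1 \<in> carrier_vec n" by (simp add: s1_def deg1_def)
  have s1i: "\<And>i. i < n \<Longrightarrow> s1 $ i = s {i}" by (simp add: s1_def deg1_def)
  have Ad1: "\<And>f. f \<in> carrier_vec n \<Longrightarrow> (A_d1 n s1 *\<^sub>v f) $ 0 = (\<Sum>j<n. s {j} * f $ j)"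
    by (subst mv_idx) (auto simp: A_d1_def s1i)
  have "1 \<in> {(A_d1 n (deg1 n s) *\<^sub>v f) $ 0 | f. f \<in> carrier_vec n}" unfolding I_eq_R by (rule UNIV_I)
  then have "\<exists>f. 1 = (A_d1 n s1 *\<^sub>v f) $ 0 \<and> f \<in> carrier_vec n"
    unfolding s1_def by (simp only: mem_Collect_eq)
  then obtain lam where lamc: "lam \<in> carrier_vec n" and lam0: "(A_d1 n s1 *\<^sub>v lam) $ 0 = 1"
    by (elim exE conjE) (rule that, assumption, rule sym)
  have lam1: "(\<Sum>j<n. s {j} * lam $ j) = 1" using Ad1[OF lamc] lam0 by simp
  define A3 where "A3 = mat N (m0+1) (\<lambda>(i,j). if j < m0 then D4 $$ (i,j) else u $ i)"
  define A2 where "A2 = mat n N (\<lambda>(i,j). D3 $$ (n+i, j))"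
  define A1 where "A1 = mat 1 n (\<lambda>(_,j). s1 $ j)"
  have A3eq: "A_d3 p q D4 u = A3" by (simp add: A3_def A_d3_def N_def m0_def)
  have A2eq: "A_d2 p q D3 = A2" by (simp add: A2_def A_d2_def n_def N_def)
  have A1eq: "A_d1 (p+2) s1 = A1" by (simp add: A1_def A_d1_def n_def)
  have A3c: "A3 \<in> carrier_mat N (m0+1)" by (simp add: A3_def)
  have A2c: "A2 \<in> carrier_mat n N" by (simp add: A2_def)
  have A1c: "A1 \<in> carrier_mat 1 n" by (simp add: A1_def)
  have A1v: "\<And>f. f \<in> carrier_vec n \<Longrightarrow> (A1 *\<^sub>v f) $ 0 = (\<Sum>j<n. s {j} * f $ j)"
    using Ad1 A1eq n_def by simp
  have A2v: "\<And>v i. v \<in> carrier_vec N \<Longrightarrow> i < n \<Longrightarrow> (A2 *\<^sub>v v) $ i = (D3 *\<^sub>v v) $ (n+i)"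
    using D3c by (auto simp: A2_def row_def scalar_prod_def intro!: sum.cong)
  have A3v: "\<And>v. v \<in> carrier_vec (m0+1) \<Longrightarrow> A3 *\<^sub>v v = D4 *\<^sub>v vec m0 (\<lambda>i. v $ i) + v $ m0 \<cdot>\<^sub>v u"
  proof -
    fix v :: "'a vec" assume v: "v \<in> carrier_vec (m0+1)"
    show "A3 *\<^sub>v v = D4 *\<^sub>v vec m0 (\<lambda>i. v $ i) + v $ m0 \<cdot>\<^sub>v u"
    proof (rule eq_vecI)
      fix k assume "k < dim_vec (D4 *\<^sub>v vec m0 (\<lambda>i. v $ i) + v $ m0 \<cdot>\<^sub>v u)"
      then have k: "k < N" using D4c uc by simp
      have "(A3 *\<^sub>v v) $ k = (\<Sum>j<m0+1. A3 $$ (k,j) * v $ j)"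
        using k v A3c by (subst mv_idx) auto
      also have "\<dots> = (\<Sum>j<m0. D4 $$ (k,j) * v $ j) + u $ k * v $ m0"
        using k by (simp add: A3_def)
      also have "(\<Sum>j<m0. D4 $$ (k,j) * v $ j) = (D4 *\<^sub>v vec m0 (\<lambda>i. v $ i)) $ k"
        using k D4c by (subst mv_idx) auto
      finally show "(A3 *\<^sub>v v) $ k = (D4 *\<^sub>v vec m0 (\<lambda>i. v $ i) + v $ m0 \<cdot>\<^sub>v u) $ k"
        using k D4c uc by (simp add: mult.commute)
    qed (use A3c D4c uc in auto)
  qed
  have D3u_top: "\<And>l. l < n \<Longrightarrow> (D3 *\<^sub>v u) $ l = s {l}" using u_lift by (simp add: deg1_def)
  have D3u_bot: "\<And>l. l < n \<Longrightarrow> (D3 *\<^sub>v u) $ (n+l) = 0" using u_lift by simp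
  have D3col: "\<And>k. k < N \<Longrightarrow> D3 *\<^sub>v unit_vec N k = col D3 k"
    using D3c by (auto intro!: eq_vecI)
  have C1: "A2 * A3 = 0\<^sub>m n (m0+1)"
  proof (rule mat_col_eqI)
    fix j assume "j < dim_col (0\<^sub>m n (m0+1) :: 'a mat)"
    then have j: "j < m0+1" by simp
    have cA3: "col A3 j = (if j < m0 then col D4 j else u)"
      using j D4c uc by (auto simp: A3_def intro!: eq_vecI)
    have "A2 *\<^sub>v col A3 j = 0\<^sub>v n"
    proof (rule eq_vecI)
      fix i assume "i < dim_vec (0\<^sub>v n :: 'a vec)"
      then have i: "i < n" by simp
      have "(A2 *\<^sub>v col A3 j) $ i = (D3 *\<^sub>v col A3 j) $ (n+i)"
        using i j A3c by (subst A2v) auto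
      also have "\<dots> = 0"
      proof (cases "j < m0")
        case True
        have "D3 *\<^sub>v col D4 j = col (D3 * D4) j" using D3c D4c True by (subst col_mult2) auto
        then show ?thesis using cA3 True D3D4 i by simp
      next
        case False
        then show ?thesis using cA3 D3u_bot i by simp
      qed
      finally show "(A2 *\<^sub>v col A3 j) $ i = 0\<^sub>v n $ i" using i by simp
    qed (use A2c in auto)
    then show "col (A2 * A3) j = col (0\<^sub>m n (m0+1)) j"
      using A2c A3c j by (subst col_mult2) auto
  qed (use A2c A3c in auto)
  have C2: "A1 * A2 = 0\<^sub>m 1 N"
  proof (rule mat_col_eqI)
    fix j assume "j < dim_col (0\<^sub>m 1 N :: 'a mat)"
    then have j: "j < N" by simp
    have "A1 *\<^sub>v col A2 j = 0\<^sub>v 1"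
    proof (rule eq_vecI)
      fix i assume "i < dim_vec (0\<^sub>v 1 :: 'a vec)"
      then have i: "i = 0" by simp
      have "(A1 *\<^sub>v col A2 j) $ 0 = (\<Sum>l<n. s {l} * col A2 j $ l)"
        using A2c j by (subst A1v) auto
      also have "\<dots> = (\<Sum>l<n. (D3 *\<^sub>v unit_vec N j) $ (n+l) * s {l})"
        using A2c j D3c by (auto simp: D3col A2_def mult.commute intro!: sum.cong)
      also have "\<dots> = 0" using cliff0[OF SP[of "unit_vec N j"]] by simp
      finally show "(A1 *\<^sub>v col A2 j) $ i = 0\<^sub>v 1 $ i" using i by simp
    qed (use A1c in auto)
    then show "col (A1 * A2) j = col (0\<^sub>m 1 N) j"
      using A1c A2c j by (subst col_mult2) auto
  qed (use A1c A2c in auto)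
  have Eij: "\<And>v i j. v \<in> carrier_vec N \<Longrightarrow> i < n \<Longrightarrow> j < n \<Longrightarrow>
      (\<Sum>m<n. tt s i j m * (D3 *\<^sub>v v) $ (n+m)) = (D3 *\<^sub>v v) $ j * s {i} - (D3 *\<^sub>v v) $ i * s {j}"
    by (rule tt_sum[OF SP])
  have s_nz: "\<exists>j<n. s {j} \<noteq> 0"
  proof (rule ccontr)
    assume "\<not> (\<exists>j<n. s {j} \<noteq> 0)"
    then have "(\<Sum>j<n. s {j} * lam $ j) = 0" by simp
    then show False using lam1 by simp
  qed
  have E1: "{v \<in> carrier_vec (m0+1). A3 *\<^sub>v v = 0\<^sub>v N} = {0\<^sub>m (m0+1) 0 *\<^sub>v w | w. w \<in> carrier_vec 0}"
  proof
    show "{0\<^sub>m (m0+1) 0 *\<^sub>v w | w. w \<in> carrier_vec 0} \<subseteq> {v \<in> carrier_vec (m0+1). A3 *\<^sub>v v = 0\<^sub>v N}"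
    proof
      fix v :: "'a vec" assume "v \<in> {0\<^sub>m (m0+1) 0 *\<^sub>v w | w. w \<in> carrier_vec 0}"
      then obtain w :: "'a vec" where "w \<in> carrier_vec 0" "v = 0\<^sub>m (m0+1) 0 *\<^sub>v w" by blast
      then have "v = 0\<^sub>v (m0+1)" by (auto intro!: eq_vecI simp: scalar_prod_def)
      then show "v \<in> {v \<in> carrier_vec (m0+1). A3 *\<^sub>v v = 0\<^sub>v N}" using A3c by simp
    qed
  next
    show "{v \<in> carrier_vec (m0+1). A3 *\<^sub>v v = 0\<^sub>v N} \<subseteq> {0\<^sub>m (m0+1) 0 *\<^sub>v w | w. w \<in> carrier_vec 0}"
    proof
      fix v :: "'a vec" assume "v \<in> {v \<in> carrier_vec (m0+1). A3 *\<^sub>v v = 0\<^sub>v N}"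
      then have v: "v \<in> carrier_vec (m0+1)" and Av: "A3 *\<^sub>v v = 0\<^sub>v N" by auto
      define b where "b = vec m0 (\<lambda>i. v $ i)"
      define r where "r = v $ m0"
      have bc: "b \<in> carrier_vec m0" by (simp add: b_def)
      have eq: "D4 *\<^sub>v b + r \<cdot>\<^sub>v u = 0\<^sub>v N" using A3v[OF v] Av by (simp add: b_def r_def)
      have "D3 *\<^sub>v (D4 *\<^sub>v b + r \<cdot>\<^sub>v u) = D3 *\<^sub>v (D4 *\<^sub>v b) + D3 *\<^sub>v (r \<cdot>\<^sub>v u)"
        using D3c D4c bc uc by (subst mult_add_distrib_mat_vec[of _ "2*n" N]) auto
      also have "D3 *\<^sub>v (D4 *\<^sub>v b) = (D3 * D4) *\<^sub>v b"
        using D3c D4c bc by (subst assoc_mult_mat_vec[of _ "2*n" N _ m0]) auto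
      also have "\<dots> = 0\<^sub>v (2*n)" using D3D4 bc by simp
      also have "D3 *\<^sub>v (r \<cdot>\<^sub>v u) = r \<cdot>\<^sub>v (D3 *\<^sub>v u)" using D3c uc by (rule mult_mat_vec_smult')
      finally have "0\<^sub>v (2*n) + r \<cdot>\<^sub>v (D3 *\<^sub>v u) = 0\<^sub>v (2*n)" using eq D3c by simp
      then have "\<And>l. l < n \<Longrightarrow> r * s {l} = 0"
      proof -
        fix l assume l: "l < n"
        assume e: "0\<^sub>v (2*n) + r \<cdot>\<^sub>v (D3 *\<^sub>v u) = 0\<^sub>v (2*n)"
        have "(0\<^sub>v (2*n) + r \<cdot>\<^sub>v (D3 *\<^sub>v u)) $ l = r * s {l}"
          using l D3c D3u_top by simp
        then show "r * s {l} = 0" using e l by simp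
      qed
      then have r0: "r = 0" using s_nz by auto
      have "D4 *\<^sub>v b = D4 *\<^sub>v b + r \<cdot>\<^sub>v u" using r0 D4c uc by (intro eq_vecI) simp_all
      then have "D4 *\<^sub>v b = 0\<^sub>v N" using eq by simp
      then have b0: "b = 0\<^sub>v m0" using D4inj bc by blast
      have "v = 0\<^sub>m (m0+1) 0 *\<^sub>v (0\<^sub>v 0)"
      proof (rule eq_vecI)
        fix i assume "i < dim_vec (0\<^sub>m (m0+1) 0 *\<^sub>v (0\<^sub>v 0) :: 'a vec)"
        then have i: "i < m0 + 1" by simp
        show "v $ i = (0\<^sub>m (m0+1) 0 *\<^sub>v (0\<^sub>v 0)) $ i"
        proof (cases "i < m0")
          case True
          then have "v $ i = b $ i" by (simp add: b_def)
          then show ?thesis using b0 True i by (simp add: scalar_prod_def)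
        next
          case False
          then have "i = m0" using i by simp
          then show ?thesis using r0 i by (simp add: r_def scalar_prod_def)
        qed
      qed (use v in auto)
      moreover have "(0\<^sub>v 0 :: 'a vec) \<in> carrier_vec 0" by simp
      ultimately show "v \<in> {0\<^sub>m (m0+1) 0 *\<^sub>v w | w. w \<in> carrier_vec 0}" by blast
    qed
  qed
  have E2: "{v \<in> carrier_vec N. A2 *\<^sub>v v = 0\<^sub>v n} = {A3 *\<^sub>v w | w. w \<in> carrier_vec (m0+1)}"
  proof
    show "{A3 *\<^sub>v w | w. w \<in> carrier_vec (m0+1)} \<subseteq> {v \<in> carrier_vec N. A2 *\<^sub>v v = 0\<^sub>v n}"
    proof
      fix v :: "'a vec" assume "v \<in> {A3 *\<^sub>v w | w. w \<in> carrier_vec (m0+1)}"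
      then obtain w :: "'a vec" where w: "w \<in> carrier_vec (m0+1)" and vw: "v = A3 *\<^sub>v w" by blast
      have "A2 *\<^sub>v v = (A2 * A3) *\<^sub>v w" unfolding vw using A2c A3c w
        by (subst assoc_mult_mat_vec[of _ n N _ "m0+1"]) auto
      also have "\<dots> = 0\<^sub>v n" using C1 w by simp
      finally show "v \<in> {v \<in> carrier_vec N. A2 *\<^sub>v v = 0\<^sub>v n}" using vw A3c w by simp
    qed
  next
    show "{v \<in> carrier_vec N. A2 *\<^sub>v v = 0\<^sub>v n} \<subseteq> {A3 *\<^sub>v w | w. w \<in> carrier_vec (m0+1)}"
    proof
      fix v :: "'a vec" assume "v \<in> {v \<in> carrier_vec N. A2 *\<^sub>v v = 0\<^sub>v n}"
      then have v: "v \<in> carrier_vec N" and Av: "A2 *\<^sub>v v = 0\<^sub>v n" by auto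
      define x where "x = D3 *\<^sub>v v"
      have xbot: "\<And>i. i < n \<Longrightarrow> x $ (n+i) = 0"
      proof -
        fix i assume i: "i < n"
        have "x $ (n+i) = (A2 *\<^sub>v v) $ i" using A2v[OF v i] by (simp add: x_def)
        then show "x $ (n+i) = 0" using Av i by simp
      qed
      have sym: "\<And>i k. i < n \<Longrightarrow> k < n \<Longrightarrow> x $ k * s {i} = x $ i * s {k}"
      proof -
        fix i k assume ik: "i < n" "k < n"
        have "(\<Sum>m<n. tt s i k m * x $ (n+m)) = 0" using xbot by simp
        then show "x $ k * s {i} = x $ i * s {k}" using Eij[OF v ik] by (simp add: x_def)
      qed
      define r where "r = (\<Sum>i<n. lam $ i * x $ i)"
      have rtop: "\<And>k. k < n \<Longrightarrow> r * s {k} = x $ k"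
      proof -
        fix k assume k: "k < n"
        have "r * s {k} = (\<Sum>i<n. lam $ i * (x $ i * s {k}))"
          unfolding r_def sum_distrib_right by (simp add: mult_ac)
        also have "\<dots> = (\<Sum>i<n. lam $ i * (x $ k * s {i}))"
          using sym k by (intro sum.cong) auto
        also have "\<dots> = x $ k * (\<Sum>i<n. s {i} * lam $ i)"
          by (simp add: sum_distrib_left mult_ac)
        also have "\<dots> = x $ k" using lam1 by simp
        finally show "r * s {k} = x $ k" .
      qed
      have D3vru: "D3 *\<^sub>v (v - r \<cdot>\<^sub>v u) = 0\<^sub>v (2*n)"
      proof -
        have "D3 *\<^sub>v (v - r \<cdot>\<^sub>v u) = D3 *\<^sub>v v - D3 *\<^sub>v (r \<cdot>\<^sub>v u)"
          using D3c v uc by (subst mult_minus_distrib_mat_vec[of _ "2*n" N]) auto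
        also have "D3 *\<^sub>v (r \<cdot>\<^sub>v u) = r \<cdot>\<^sub>v (D3 *\<^sub>v u)" using D3c uc by (rule mult_mat_vec_smult')
        also have "D3 *\<^sub>v v - r \<cdot>\<^sub>v (D3 *\<^sub>v u) = 0\<^sub>v (2*n)"
        proof (rule eq_vecI)
          fix l assume "l < dim_vec (0\<^sub>v (2*n) :: 'a vec)"
          then have l: "l < 2*n" by simp
          show "(D3 *\<^sub>v v - r \<cdot>\<^sub>v (D3 *\<^sub>v u)) $ l = 0\<^sub>v (2*n) $ l"
          proof (cases "l < n")
            case True
            then show ?thesis using l D3c rtop[OF True] D3u_top[OF True] by (simp add: x_def)
          next
            case False
            then obtain i where i: "i < n" and li: "l = n + i" using l
              by (metis add_diff_inverse_nat add_less_cancel_left mult_2)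
            show ?thesis using l D3c xbot[OF i] D3u_bot[OF i] li by (simp add: x_def)
          qed
        qed (use D3c in auto)
        finally show ?thesis .
      qed
      have vruc: "v - r \<cdot>\<^sub>v u \<in> carrier_vec N" using v uc by simp
      obtain w0 where w0: "w0 \<in> carrier_vec m0" and vw0: "v - r \<cdot>\<^sub>v u = D4 *\<^sub>v w0"
        using ker2[OF vruc D3vru] by blast
      define w where "w = vec (m0+1) (\<lambda>i. if i < m0 then w0 $ i else r)"
      have wc: "w \<in> carrier_vec (m0+1)" by (simp add: w_def)
      have vw: "vec m0 (\<lambda>i. w $ i) = w0" using w0 by (auto simp: w_def intro!: eq_vecI)
      have "A3 *\<^sub>v w = D4 *\<^sub>v w0 + r \<cdot>\<^sub>v u" using A3v[OF wc] vw by (simp add: w_def)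
      also have "\<dots> = v"
      proof (rule eq_vecI)
        fix k assume "k < dim_vec v"
        then have k: "k < N" using v by simp
        have "(v - r \<cdot>\<^sub>v u) $ k = v $ k - r * u $ k" using k v uc by simp
        then have "(D4 *\<^sub>v w0) $ k = v $ k - r * u $ k" using vw0 by simp
        then show "(D4 *\<^sub>v w0 + r \<cdot>\<^sub>v u) $ k = v $ k" using k D4c uc by simp
      qed (use D4c uc v in auto)
      finally have "v = A3 *\<^sub>v w" by simp
      with wc show "v \<in> {A3 *\<^sub>v w | w. w \<in> carrier_vec (m0+1)}" by blast
    qed
  qed
  have D3ent: "\<And>k l. k < N \<Longrightarrow> l < 2*n \<Longrightarrow> (D3 *\<^sub>v unit_vec N k) $ l = D3 $$ (l,k)"
    using D3c D3col by simp
  have key: "\<And>f k. f \<in> carrier_vec n \<Longrightarrow> (\<Sum>j<n. s {j} * f $ j) = 0 \<Longrightarrow> k < N \<Longrightarrow>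
     (\<Sum>l<n. D3 $$ (l,k) * f $ l) +
     (\<Sum>m<n. D3 $$ (n+m,k) * (- (\<Sum>i<n. \<Sum>j<n. lam $ i * f $ j * tt s i j m)))  = 0"
  proof -
    fix f :: "'a vec" and k assume f: "f \<in> carrier_vec n" and fs0: "(\<Sum>j<n. s {j} * f $ j) = 0"
      and k: "k < N"
    have ek: "unit_vec N k \<in> carrier_vec N" by simp
    have E: "\<And>i j. i < n \<Longrightarrow> j < n \<Longrightarrow>
       (\<Sum>m<n. tt s i j m * D3 $$ (n+m,k)) = D3 $$ (j,k) * s {i} - D3 $$ (i,k) * s {j}"
    proof -
      fix i j assume ij: "i < n" "j < n"
      have "(\<Sum>m<n. tt s i j m * D3 $$ (n+m,k)) = (\<Sum>m<n. tt s i j m * (D3 *\<^sub>v unit_vec N k) $ (n+m))"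
        using D3ent k by (intro sum.cong refl) simp
      also have "\<dots> = (D3 *\<^sub>v unit_vec N k) $ j * s {i} - (D3 *\<^sub>v unit_vec N k) $ i * s {j}"
        using Eij[OF ek ij] .
      also have "\<dots> = D3 $$ (j,k) * s {i} - D3 $$ (i,k) * s {j}" using D3ent k ij by simp
      finally show "(\<Sum>m<n. tt s i j m * D3 $$ (n+m,k)) = D3 $$ (j,k) * s {i} - D3 $$ (i,k) * s {j}" .
    qed
    show "(\<Sum>l<n. D3 $$ (l,k) * f $ l) +
     (\<Sum>m<n. D3 $$ (n+m,k) * (- (\<Sum>i<n. \<Sum>j<n. lam $ i * f $ j * tt s i j m)))  = 0"
      by (rule key_lemma[where a="\<lambda>l. D3 $$ (l,k)" and b="\<lambda>m. D3 $$ (n+m,k)" and f="\<lambda>j. f $ j"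
          and lam="\<lambda>i. lam $ i" and sg="\<lambda>i. s {i}" and T="tt s", OF E lam1 fs0])
  qed
  have betac: "(beta_mat n :: 'a mat) \<in> carrier_mat (2*n) (2*n)" by (simp add: beta_mat_def)
  have betav: "\<And>y :: 'a vec. y \<in> carrier_vec (2*n) \<Longrightarrow>
     beta_mat n *\<^sub>v y = vec (2*n) (\<lambda>k. if k < n then y $ (k+n) else y $ (k-n))"
  proof -
    fix y :: "'a vec" assume y: "y \<in> carrier_vec (2*n)"
    have idx: "(beta_mat n *\<^sub>v y) $ k = (if k < n then y $ (k+n) else y $ (k-n))" if k: "k < 2*n" for k
    proof -
      define c where "c = (if k < n then k+n else k-n)"
      have c: "c < 2*n" using k by (auto simp: c_def)
      have "(beta_mat n *\<^sub>v y) $ k = (\<Sum>l<2*n. beta_mat n $$ (k,l) * y $ l)"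
        using k y by (subst mv_idx) (auto simp: beta_mat_def)
      also have "\<dots> = (\<Sum>l<2*n. if l = c then y $ l else 0)"
        using k by (intro sum.cong refl) (auto simp: beta_mat_def c_def)
      also have "\<dots> = y $ c" using c by (simp add: sum.delta)
      finally show ?thesis by (simp add: c_def)
    qed
    have dims: "dim_vec (beta_mat n *\<^sub>v y) = 2*n" using betac by (simp add: carrier_matD)
    show "beta_mat n *\<^sub>v y = vec (2*n) (\<lambda>k. if k < n then y $ (k+n) else y $ (k-n))"
      by (rule eq_vecI) (simp_all add: idx carrier_matD[OF betac] del: index_mult_mat_vec)
  qed
  have E3: "{f \<in> carrier_vec n. A1 *\<^sub>v f = 0\<^sub>v 1} = {A2 *\<^sub>v c | c. c \<in> carrier_vec N}"
  proof
    show "{A2 *\<^sub>v c | c. c \<in> carrier_vec N} \<subseteq> {f \<in> carrier_vec n. A1 *\<^sub>v f = 0\<^sub>v 1}"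
    proof
      fix v :: "'a vec" assume "v \<in> {A2 *\<^sub>v c | c. c \<in> carrier_vec N}"
      then obtain w :: "'a vec" where w: "w \<in> carrier_vec N" and vw: "v = A2 *\<^sub>v w" by blast
      have "A1 *\<^sub>v v = (A1 * A2) *\<^sub>v w" unfolding vw using A1c A2c w
        by (subst assoc_mult_mat_vec[of _ 1 n _ N]) auto
      also have "\<dots> = 0\<^sub>v 1" using C2 w by simp
      finally show "v \<in> {f \<in> carrier_vec n. A1 *\<^sub>v f = 0\<^sub>v 1}" using vw A2c w by simp
    qed
  next
    show "{f \<in> carrier_vec n. A1 *\<^sub>v f = 0\<^sub>v 1} \<subseteq> {A2 *\<^sub>v c | c. c \<in> carrier_vec N}"
    proof
      fix f :: "'a vec" assume "f \<in> {f \<in> carrier_vec n. A1 *\<^sub>v f = 0\<^sub>v 1}"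
      then have f: "f \<in> carrier_vec n" and Af: "A1 *\<^sub>v f = 0\<^sub>v 1" by auto
      have "(A1 *\<^sub>v f) $ 0 = 0" using Af by simp
      then have fs0: "(\<Sum>j<n. s {j} * f $ j) = 0" using A1v[OF f] by simp
      define g where "g = vec n (\<lambda>m. - (\<Sum>i<n. \<Sum>j<n. lam $ i * f $ j * tt s i j m))"
      define y where "y = vec (2*n) (\<lambda>k. if k < n then g $ k else f $ (k-n))"
      have yc: "y \<in> carrier_vec (2*n)" by (simp add: y_def)
      have by0: "Bd *\<^sub>v y = 0\<^sub>v N"
      proof -
        have "Bd *\<^sub>v y = transpose_mat D3 *\<^sub>v (beta_mat n *\<^sub>v y)"
          unfolding Bd_def using D3c betac yc by (subst assoc_mult_mat_vec[of _ N "2*n" _ "2*n"]) auto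
        also have "beta_mat n *\<^sub>v y = vec (2*n) (\<lambda>k. if k < n then f $ k else g $ (k-n))"
          unfolding betav[OF yc] by (rule eq_vecI) (auto simp: y_def)
        also have "transpose_mat D3 *\<^sub>v vec (2*n) (\<lambda>k. if k < n then f $ k else g $ (k-n)) = 0\<^sub>v N"
        proof (rule eq_vecI)
          fix k assume "k < dim_vec (0\<^sub>v N :: 'a vec)"
          then have k: "k < N" by simp
          have "(transpose_mat D3 *\<^sub>v vec (2*n) (\<lambda>k. if k < n then f $ k else g $ (k-n))) $ k
             = (\<Sum>l<n+n. D3 $$ (l,k) * vec (2*n) (\<lambda>k. if k < n then f $ k else g $ (k-n)) $ l)"
            using k D3c by (subst mv_idx) (auto simp: mult_2)
          also have "\<dots> = (\<Sum>l<n. D3 $$ (l,k) * f $ l) + (\<Sum>m<n. D3 $$ (n+m,k) * g $ m)"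
            unfolding sum_lessThan_add_split by (simp add: mult_2)
          also have "(\<Sum>m<n. D3 $$ (n+m,k) * g $ m) =
              (\<Sum>m<n. D3 $$ (n+m,k) * (- (\<Sum>i<n. \<Sum>j<n. lam $ i * f $ j * tt s i j m)))"
            by (rule sum.cong[OF refl]) (simp add: g_def)
          also have "(\<Sum>l<n. D3 $$ (l,k) * f $ l) +
              (\<Sum>m<n. D3 $$ (n+m,k) * (- (\<Sum>i<n. \<Sum>j<n. lam $ i * f $ j * tt s i j m))) = 0"
            by (rule key[OF f fs0 k])
          finally show "(transpose_mat D3 *\<^sub>v vec (2*n) (\<lambda>k. if k < n then f $ k else g $ (k-n))) $ k = 0\<^sub>v N $ k"
            using k by simp
        qed (use D3c in auto)
        finally show ?thesis .
      qed
      obtain c where c: "c \<in> carrier_vec N" and yD: "y = D3 *\<^sub>v c" using ker3[OF yc by0] by blast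
      have "f = A2 *\<^sub>v c"
      proof (rule eq_vecI)
        fix i assume "i < dim_vec (A2 *\<^sub>v c)"
        then have i: "i < n" using A2c by simp
        have "(A2 *\<^sub>v c) $ i = y $ (n+i)" using A2v[OF c i] yD by simp
        then show "f $ i = (A2 *\<^sub>v c) $ i" using i by (simp add: y_def)
      qed (use f A2c in auto)
      with c show "f \<in> {A2 *\<^sub>v c | c. c \<in> carrier_vec N}" by blast
    qed
  qed
  have A1eq': "A_d1 n (deg1 n s) = A1" using A1eq by (simp add: n_def s1_def)
  have E4: "{v \<in> carrier_vec 1. 0\<^sub>m 0 1 *\<^sub>v v = 0\<^sub>v 0} = {A1 *\<^sub>v w | w. w \<in> carrier_vec n}"
  proof
    show "{A1 *\<^sub>v w | w. w \<in> carrier_vec n} \<subseteq> {v \<in> carrier_vec 1. 0\<^sub>m 0 1 *\<^sub>v v = 0\<^sub>v 0}"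
    proof
      fix v :: "'a vec" assume "v \<in> {A1 *\<^sub>v w | w. w \<in> carrier_vec n}"
      then obtain w :: "'a vec" where w: "w \<in> carrier_vec n" and vw: "v = A1 *\<^sub>v w" by blast
      have vc: "v \<in> carrier_vec 1" using vw w A1c by simp
      then show "v \<in> {v \<in> carrier_vec 1. 0\<^sub>m 0 1 *\<^sub>v v = 0\<^sub>v 0}" by simp
    qed
  next
    show "{v \<in> carrier_vec 1. 0\<^sub>m 0 1 *\<^sub>v v = 0\<^sub>v 0} \<subseteq> {A1 *\<^sub>v w | w. w \<in> carrier_vec n}"
    proof
      fix v :: "'a vec" assume "v \<in> {v \<in> carrier_vec 1. 0\<^sub>m 0 1 *\<^sub>v v = 0\<^sub>v 0}"
      then have v: "v \<in> carrier_vec 1" by simp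
      have "v $ 0 \<in> {(A_d1 n (deg1 n s) *\<^sub>v f) $ 0 | f. f \<in> carrier_vec n}" unfolding I_eq_R by (rule UNIV_I)
      then have "\<exists>f. v $ 0 = (A1 *\<^sub>v f) $ 0 \<and> f \<in> carrier_vec n"
        unfolding A1eq' by (simp only: mem_Collect_eq)
      then obtain f where fc: "f \<in> carrier_vec n" and vf: "v $ 0 = (A1 *\<^sub>v f) $ 0"
        by (elim exE conjE) (rule that)
      have "v = A1 *\<^sub>v f"
      proof (rule eq_vecI)
        fix i assume "i < dim_vec (A1 *\<^sub>v f)"
        then have "i = 0" using A1c by simp
        then show "v $ i = (A1 *\<^sub>v f) $ i" using vf by simp
      qed (use v A1c in auto)
      with fc show "v \<in> {A1 *\<^sub>v w | w. w \<in> carrier_vec n}" by blast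
    qed
  qed
  have Z1: "(0\<^sub>m 0 1 :: 'a mat) * A1 = 0\<^sub>m 0 n" using A1c by (auto intro!: eq_matI)
  have Z0: "A3 * (0\<^sub>m (m0+1) 0 :: 'a mat) = 0\<^sub>m N 0" using A3c by (auto intro!: eq_matI)
  have sp4: "(0\<^sub>m 0 1 :: 'a mat) * 0\<^sub>m 1 0 * 0\<^sub>m 0 1 = 0\<^sub>m 0 1" by (auto intro!: eq_matI)
  obtain t3 where t3: "t3 \<in> carrier_mat n 1" and sp3: "A1 * t3 * A1 = A1"
    using split_step[OF A1c _ _ sp4 Z1 E4] by auto
  obtain t2 where t2: "t2 \<in> carrier_mat N n" and sp2: "A2 * t2 * A2 = A2"
    using split_step[OF A2c A1c t3 sp3 C2 E3] by auto
  obtain t1 where t1: "t1 \<in> carrier_mat (m0+1) N" and sp1: "A3 * t1 * A3 = A3"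
    using split_step[OF A3c A2c t2 sp2 C1 E2] by auto
  obtain t0 where t0: "t0 \<in> carrier_mat 0 (m0+1)" and sp0: "0\<^sub>m (m0+1) 0 * t0 * 0\<^sub>m (m0+1) 0 = (0\<^sub>m (m0+1) 0 :: 'a mat)"
    using split_step[OF _ A3c t1 sp1 Z0 E1] by auto
  define ksA where "ksA = [0, m0+1, N, n, 1, 0]"
  define dsA where "dsA = [0\<^sub>m (m0+1) 0, A3, A2, A1, 0\<^sub>m 0 1 :: 'a mat]"
  have goal: "split_exact (cplxA_dims p q) (cplxA_maps p q D4 D3 u (deg1 n s)) \<longleftrightarrow>
     is_chain ksA dsA \<and> (\<forall>i. 0 < i \<and> i < length dsA \<longrightarrow> exact_at ksA dsA i) \<and>
     (\<forall>i<length dsA. \<exists>s \<in> carrier_mat (ksA!i) (ksA!(i+1)). dsA!i * s * dsA!i = dsA!i)"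
    unfolding split_exact_def Let_def cplxA_dims_def cplxA_maps_def A3eq A2eq
      s1_def[symmetric] A1eq ksA_def dsA_def
    by (simp add: N_def m0_def n_def)
  have five: "\<And>i::nat. i < 5 \<Longrightarrow> i = 0 \<or> i = 1 \<or> i = 2 \<or> i = 3 \<or> i = 4" by arith
  have lenA: "length dsA = 5" by (simp add: dsA_def)
  have chA: "is_chain ksA dsA"
    unfolding is_chain_def
  proof (intro conjI allI impI)
    show "length ksA = length dsA + 1" by (simp add: ksA_def dsA_def)
  next
    fix i assume "i < length dsA"
    then have "i = 0 \<or> i = 1 \<or> i = 2 \<or> i = 3 \<or> i = 4" using five lenA by simp
    then show "dsA ! i \<in> carrier_mat (ksA ! (i + 1)) (ksA ! i)"
      using A3c A2c A1c by (elim disjE) (auto simp: ksA_def dsA_def)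
  next
    fix i assume "i + 1 < length dsA"
    then have "i = 0 \<or> i = 1 \<or> i = 2 \<or> i = 3" using lenA by arith
    then show "dsA ! (i + 1) * dsA ! i = 0\<^sub>m (ksA ! (i + 2)) (ksA ! i)"
      using Z0 C1 C2 Z1 by (elim disjE) (auto simp: ksA_def dsA_def eval_nat_numeral)
  qed
  have exA: "\<forall>i. 0 < i \<and> i < length dsA \<longrightarrow> exact_at ksA dsA i"
  proof (intro allI impI)
    fix i assume "0 < i \<and> i < length dsA"
    then have "i = 1 \<or> i = 2 \<or> i = 3 \<or> i = 4" using lenA by arith
    have kn: "ksA!0 = 0" "ksA!1 = m0+1" "ksA!2 = N" "ksA!3 = n" "ksA!4 = 1" "ksA!5 = 0"
      by (simp_all add: ksA_def eval_nat_numeral)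
    have dn: "dsA!0 = 0\<^sub>m (m0+1) 0" "dsA!1 = A3" "dsA!2 = A2" "dsA!3 = A1" "dsA!4 = 0\<^sub>m 0 1"
      by (simp_all add: dsA_def eval_nat_numeral)
    have ar: "(1::nat)+1 = 2" "(1::nat)-1 = 0" "(2::nat)+1 = 3" "(2::nat)-1 = 1"
      "(3::nat)+1 = 4" "(3::nat)-1 = 2" "(4::nat)+1 = 5" "(4::nat)-1 = 3" by simp_all
    have x1: "exact_at ksA dsA 1" unfolding exact_at_def ar kn dn by (rule E1)
    have x2: "exact_at ksA dsA 2" unfolding exact_at_def ar kn dn by (rule E2)
    have x3: "exact_at ksA dsA 3" unfolding exact_at_def ar kn dn by (rule E3)
    have x4: "exact_at ksA dsA 4" unfolding exact_at_def ar kn dn by (rule E4)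
    show "exact_at ksA dsA i" using x1 x2 x3 x4 \<open>i = 1 \<or> i = 2 \<or> i = 3 \<or> i = 4\<close> by blast
  qed
  have spA: "\<forall>i<length dsA. \<exists>s \<in> carrier_mat (ksA!i) (ksA!(i+1)). dsA!i * s * dsA!i = dsA!i"
  proof (intro allI impI)
    fix i assume "i < length dsA"
    then have "i = 0 \<or> i = 1 \<or> i = 2 \<or> i = 3 \<or> i = 4" using five lenA by simp
    then show "\<exists>s \<in> carrier_mat (ksA!i) (ksA!(i+1)). dsA!i * s * dsA!i = dsA!i"
    proof (elim disjE)
      assume "i = 0" then show ?thesis using t0 sp0 by (auto simp: ksA_def dsA_def)
    next
      assume "i = 1" then show ?thesis using t1 sp1 by (auto simp: ksA_def dsA_def)
    next
      assume "i = 2" then show ?thesis using t2 sp2 by (auto simp: ksA_def dsA_def eval_nat_numeral)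
    next
      assume "i = 3" then show ?thesis using t3 sp3 by (auto simp: ksA_def dsA_def eval_nat_numeral)
    next
      assume "i = 4" then show ?thesis using sp4 by (auto simp: ksA_def dsA_def eval_nat_numeral
          intro!: bexI[of _ "0\<^sub>m 1 0"])
    qed
  qed
  show ?thesis using goal chA exA spA by blast

qed
end
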